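(* It is not the case that, for every propositional formula $\pi$ and every formula $\varphi$, the formula $[\ddagger\pi]\varphi \leftrightarrow [\dagger\pi][\dagger\lnot\pi]\varphi$ is true at every world of every $\mathsf{S5}$ model (model whose relation is an equivalence relation). That is, forgetting whether $\pi$ is not equivalent to forgetting $\pi$ and then forgetting $\lnot\pi$, even over $\mathsf{S5}$ models.
   Context: Fix a countable non-empty set $\mathit{At}$ of atoms. Formulas are built from $\top$, atoms, $\lnot$, $\land$, $\Box$ and, for each propositional $\pi$, operators $[\ddagger\pi]$ ("after forgetting whether $\pi$") and $[\dagger\pi]$ ("after forgetting $\pi$"); other connectives as usual. A model is $\mathcal{M}=\langle W,R,V\rangle$, $W\neq\varnothing$, $R\subseteq W\times W$, $V:\mathit{At}\to\mathcal{P}(W)$, with standard Kripke semantics for $\Box$. A literal is an atom or its negation; a clause is a finite set $D$ of literals read as $\bigvee D$ ($\bigvee\varnothing:=\bot$), tautological if it contains $p$ and $\lnot p$ for some $p$. For propositional $\pi$, $\mathcal{C}(\pi)$ is the set of non-tautological clauses $D$ with $\models\pi\to\bigvee D$ and no $D'\subsetneq D$ with $\models\pi\to\bigvee D'$. For a model $\mathcal{M}$ and a finite family $(D_i)_{i\in I}$ of non-tautological clauses, $0\notin I$, $\mathcal{M}^{(D_i)_{i\in I}}_u=\langle W',R',V'\rangle$ has $W'=W\times(\{0\}\cup I)$, $(w,i)R'(v,j)$ iff $wRv$, $(w,0)\in V'(p)$ iff $w\in V(p)$, and for $i\in I$: $(w,i)\in V'(p)$ iff $\lnot p\in D_i$,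 or $\{p,\lnot p\}\cap D_i=\varnothing$ and $w\in V(p)$. Semantics: $\mathcal{M},w\models[\ddagger\pi]\varphi$ iff for all $D_1\in\mathcal{C}(\pi)$, $D_2\in\mathcal{C}(\lnot\pi)$, $\mathcal{M}^{(D_1,D_2)}_u,(w,0)\models\varphi$; $\mathcal{M},w\models[\dagger\pi]\varphi$ iff for all $D\in\mathcal{C}(\pi)$, $\mathcal{M}^{(D)}_u,(w,0)\models\varphi$ (family indexed by $I=\{1\}$). *)

theory Defs
  imports "HOL-Library.Countable"
begin

datatype 'a pform = PTop | PAtom 'a | PNeg "'a pform" | PAnd "'a pform" "'a pform"

text \<open>Modal formulas; FgW pi phi is [forget whether pi] phi, Fg pi phi is [forget pi] phi.\<close>
datatype 'a form =
    Top
  | Atom 'a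
  | Neg "'a form"
  | And "'a form" "'a form"
  | Box "'a form"
  | FgW "'a pform" "'a form"
  | Fg "'a pform" "'a form"

definition Or :: "'a form \<Rightarrow> 'a form \<Rightarrow> 'a form" where
  "Or a b = Neg (And (Neg a) (Neg b))"

definition Imp :: "'a form \<Rightarrow> 'a form \<Rightarrow> 'a form" where
  "Imp a b = Neg (And a (Neg b))"

definition Iff :: "'a form \<Rightarrow> 'a form \<Rightarrow> 'a form" where
  "Iff a b = And (Imp a b) (Imp b a)"

primrec peval :: "('a \<Rightarrow> bool) \<Rightarrow> 'a pform \<Rightarrow> bool" where
  "peval v PTop = True"
| "peval v (PAtom p) = v p"
| "peval v (PNeg a) = (\<not> peval v a)"
| "peval v (PAnd a b) = (peval v a \<and> peval v b)"

text \<open>A literal is (p, True) for the atom p and (p, False) for its negation.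
  A clause is a finite set of literals, read disjunctively.\<close>
type_synonym 'a clause = "('a \<times> bool) set"

definition clause_val :: "('a \<Rightarrow> bool) \<Rightarrow> 'a clause \<Rightarrow> bool" where
  "clause_val v D = (\<exists>(p, b) \<in> D. v p = b)"

definition tautological :: "'a clause \<Rightarrow> bool" where
  "tautological D = (\<exists>p. (p, True) \<in> D \<and> (p, False) \<in> D)"

definition entails_clause :: "'a pform \<Rightarrow> 'a clause \<Rightarrow> bool" where
  "entails_clause \<pi> D = (\<forall>v. peval v \<pi> \<longrightarrow> clause_val v D)"

definition Cl :: "'a pform \<Rightarrow> 'a clause set" where
  "Cl \<pi> = {D. finite D \<and> \<not> tautological D \<and> entails_clause \<pi> D
              \<and> \<not> (\<exists>D'. D' \<subset> D \<and> entails_clause \<pi> D')}"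

type_synonym ('a, 'w) model = "'w set \<times> ('w \<times> 'w) set \<times> ('a \<Rightarrow> 'w set)"

definition wf_model :: "('a, 'w) model \<Rightarrow> bool" where
  "wf_model M = (case M of (W, R, V) \<Rightarrow> W \<noteq> {} \<and> R \<subseteq> W \<times> W \<and> (\<forall>p. V p \<subseteq> W))"

definition S5_model :: "('a, 'w) model \<Rightarrow> bool" where
  "S5_model M = (wf_model M \<and> (case M of (W, R, V) \<Rightarrow> equiv W R))"

text \<open>Internally, worlds of iterated update models are encoded as pairs (w, xs):
  the original world w together with the list xs of copy indices chosen by the successive
  updates; the pair (u, i) of the paper (u a world, i an index in {0} \<union> I) is encoded
  by appending i to the index list of u.  The family (D_i)_{i \<in> I} is given as a list Ds,
  with I = {1..length Ds} and D_i = Ds ! (i - 1).\<close>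

definition lit_upd :: "'a clause \<Rightarrow> 'a \<Rightarrow> bool \<Rightarrow> bool" where
  "lit_upd D p old = ((p, False) \<in> D \<or> ((p, True) \<notin> D \<and> (p, False) \<notin> D \<and> old))"

definition upd :: "('a, 'w \<times> nat list) model \<Rightarrow> 'a clause list \<Rightarrow> ('a, 'w \<times> nat list) model" where
  "upd M Ds = (case M of (W, R, V) \<Rightarrow>
     ({(w, xs @ [i]) | w xs i. (w, xs) \<in> W \<and> i \<le> length Ds},
      {((w, xs @ [i]), (v, ys @ [j])) | w xs i v ys j.
          ((w, xs), (v, ys)) \<in> R \<and> i \<le> length Ds \<and> j \<le> length Ds},
      \<lambda>p. {(w, xs @ [i]) | w xs i. (w, xs) \<in> W \<and> i \<le> length Ds \<and>
              (if i = 0 then (w, xs) \<in> V p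
               else lit_upd (Ds ! (i - 1)) p ((w, xs) \<in> V p))}))"

definition rel_of :: "('a, 'w) model \<Rightarrow> ('w \<times> 'w) set" where
  "rel_of M = fst (snd M)"

definition val_of :: "('a, 'w) model \<Rightarrow> 'a \<Rightarrow> 'w set" where
  "val_of M = snd (snd M)"

primrec sat :: "('a, 'w \<times> nat list) model \<Rightarrow> 'w \<times> nat list \<Rightarrow> 'a form \<Rightarrow> bool" where
  "sat M w Top = True"
| "sat M w (Atom p) = (w \<in> val_of M p)"
| "sat M w (Neg \<phi>) = (\<not> sat M w \<phi>)"
| "sat M w (And \<phi> \<psi>) = (sat M w \<phi> \<and> sat M w \<psi>)"
| "sat M w (Box \<phi>) = (\<forall>v. (w, v) \<in> rel_of M \<longrightarrow> sat M v \<phi>)"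
| "sat M w (FgW \<pi> \<phi>) = (\<forall>D1 \<in> Cl \<pi>. \<forall>D2 \<in> Cl (PNeg \<pi>).
        sat (upd M [D1, D2]) (fst w, snd w @ [0]) \<phi>)"
| "sat M w (Fg \<pi> \<phi>) = (\<forall>D \<in> Cl \<pi>. sat (upd M [D]) (fst w, snd w @ [0]) \<phi>)"

definition lift :: "('a, 'w) model \<Rightarrow> ('a, 'w \<times> nat list) model" where
  "lift M = (case M of (W, R, V) \<Rightarrow>
     ({(w, []) | w. w \<in> W}, {((w, []), (v, [])) | w v. (w, v) \<in> R},
      \<lambda>p. {(w, []) | w. w \<in> V p}))"

definition holds :: "('a, 'w) model \<Rightarrow> 'w \<Rightarrow> 'a form \<Rightarrow> bool" where
  "holds M w \<phi> = sat (lift M) (w, []) \<phi>"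

end

theory Submission
  imports Defs
begin

lemma falsify:
  assumes "\<not> tautological D"
  shows "\<not> clause_val (\<lambda>x. (x, False) \<in> D) D"
proof
  assume "clause_val (\<lambda>x. (x, False) \<in> D) D"
  then obtain x b where xb: "(x,b) \<in> D" "((x, False) \<in> D) = b" unfolding clause_val_def by auto
  show False using assms xb unfolding tautological_def by (cases b) auto
qed

lemma cl_pi:
  assumes pq: "p \<noteq> q"
  shows "Cl (PNeg (PAnd (PNeg (PAtom p)) (PNeg (PAtom q)))) = {{(p,True),(q,True)}}"
    (is "Cl ?\<pi> = {?E}")
proof
  have entE: "entails_clause ?\<pi> ?E" unfolding entails_clause_def clause_val_def by auto
  show "Cl ?\<pi> \<subseteq> {?E}"
  proof
    fix D assume D: "D \<in> Cl ?\<pi>"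
    hence nt: "\<not> tautological D" and ent: "entails_clause ?\<pi> D"
      and min: "\<not> (\<exists>D'. D' \<subset> D \<and> entails_clause ?\<pi> D')" unfolding Cl_def by auto
    let ?v = "\<lambda>x. (x, False) \<in> D"
    have f: "\<not> clause_val ?v D" by (rule falsify[OF nt])
    have a: "(p, True) \<in> D"
    proof (rule ccontr)
      assume n: "(p, True) \<notin> D"
      have "clause_val (?v(p := True)) D"
        using ent unfolding entails_clause_def by auto
      then obtain x b where xb: "(x,b) \<in> D" "(?v(p := True)) x = b"
        unfolding clause_val_def by auto
      show False
      proof (cases "x = p")
        case True thus False using xb n by auto
      next
        case False thus False using xb f unfolding clause_val_def by auto
      qed
    qed
    have b: "(q, True) \<in> D"
    proof (rule ccontr)
      assume n: "(q, True) \<notin> D"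
      have "clause_val (?v(q := True)) D"
        using ent unfolding entails_clause_def by auto
      then obtain x b where xb: "(x,b) \<in> D" "(?v(q := True)) x = b"
        unfolding clause_val_def by auto
      show False
      proof (cases "x = q")
        case True thus False using xb n by auto
      next
        case False thus False using xb f unfolding clause_val_def by auto
      qed
    qed
    have "?E \<subseteq> D" using a b by auto
    hence "D = ?E" using min entE by blast
    thus "D \<in> {?E}" by simp
  qed
  show "{?E} \<subseteq> Cl ?\<pi>"
  proof -
    have nt: "\<not> tautological ?E" using pq unfolding tautological_def by auto
    have min: "\<not> (\<exists>D'. D' \<subset> ?E \<and> entails_clause ?\<pi> D')"
    proof
      assume "\<exists>D'. D' \<subset> ?E \<and> entails_clause ?\<pi> D'"
      then obtain D' where D': "D' \<subset> ?E" "entails_clause ?\<pi> D'" by blast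
      hence "(p,True) \<notin> D' \<or> (q,True) \<notin> D'" by auto
      thus False
      proof
        assume n: "(p,True) \<notin> D'"
        have "clause_val (\<lambda>x. x = p) D'" using D'(2) unfolding entails_clause_def by auto
        then obtain x b where "(x,b) \<in> D'" "(x = p) = b" unfolding clause_val_def by auto
        thus False using n D'(1) pq by auto
      next
        assume n: "(q,True) \<notin> D'"
        have "clause_val (\<lambda>x. x = q) D'" using D'(2) unfolding entails_clause_def by auto
        then obtain x b where "(x,b) \<in> D'" "(x = q) = b" unfolding clause_val_def by auto
        thus False using n D'(1) pq by auto
      qed
    qed
    show ?thesis using nt min entE unfolding Cl_def by auto
  qed
qed

lemma cl_npi:
  assumes pq: "p \<noteq> q"
  shows "Cl (PNeg (PNeg (PAnd (PNeg (PAtom p)) (PNeg (PAtom q))))) = {{(p,False)},{(q,False)}}"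
    (is "Cl ?\<pi> = _")
proof
  have eP: "entails_clause ?\<pi> {(p,False)}" unfolding entails_clause_def clause_val_def by auto
  have eQ: "entails_clause ?\<pi> {(q,False)}" unfolding entails_clause_def clause_val_def by auto
  show "Cl ?\<pi> \<subseteq> {{(p,False)},{(q,False)}}"
  proof
    fix D assume D: "D \<in> Cl ?\<pi>"
    hence nt: "\<not> tautological D" and ent: "entails_clause ?\<pi> D"
      and min: "\<not> (\<exists>D'. D' \<subset> D \<and> entails_clause ?\<pi> D')" unfolding Cl_def by auto
    let ?v = "\<lambda>x. (x, False) \<in> D"
    have f: "\<not> clause_val ?v D" by (rule falsify[OF nt])
    hence "\<not> peval ?v ?\<pi>" using ent unfolding entails_clause_def by blast
    hence "(p,False) \<in> D \<or> (q,False) \<in> D" by simp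
    thus "D \<in> {{(p,False)},{(q,False)}}"
    proof
      assume "(p,False) \<in> D"
      hence "{(p,False)} \<subseteq> D" by auto
      hence "D = {(p,False)}" using min eP by blast
      thus ?thesis by simp
    next
      assume "(q,False) \<in> D"
      hence "{(q,False)} \<subseteq> D" by auto
      hence "D = {(q,False)}" using min eQ by blast
      thus ?thesis by simp
    qed
  qed
  have e0: "\<not> entails_clause ?\<pi> {}" unfolding entails_clause_def clause_val_def by auto
  show "{{(p,False)},{(q,False)}} \<subseteq> Cl ?\<pi>"
    using eP eQ e0 unfolding Cl_def tautological_def by (auto simp: subset_singleton_iff)
qed

lemma rel_upd: "rel_of (upd M Ds) = {((w, xs @ [i]), (v, ys @ [j])) | w xs i v ys j.
   ((w, xs), (v, ys)) \<in> rel_of M \<and> i \<le> length Ds \<and> j \<le> length Ds}"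
  by (cases M) (simp add: upd_def rel_of_def)

lemma val_upd: "(w, xs @ [i]) \<in> val_of (upd M Ds) p \<longleftrightarrow> (w,xs) \<in> fst M \<and> i \<le> length Ds \<and>
   (if i=0 then (w,xs)\<in>val_of M p else lit_upd (Ds!(i-1)) p ((w,xs)\<in>val_of M p))"
  by (cases M) (simp add: upd_def val_of_def)

lemma fst_upd: "(w, xs @ [i]) \<in> fst (upd M Ds) \<longleftrightarrow> (w,xs) \<in> fst M \<and> i \<le> length Ds"
  by (cases M) (simp add: upd_def)

theorem proposition2:
  fixes dummy :: "'a::countable"
  assumes "\<exists>p q :: 'a. p \<noteq> q"
  shows "\<not> (\<forall>(\<pi> :: 'a pform) (\<phi> :: 'a form) (M :: ('a, 'w) model) w.
             S5_model M \<and> w \<in> fst M \<longrightarrow>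
             holds M w (Iff (FgW \<pi> \<phi>) (Fg \<pi> (Fg (PNeg \<pi>) \<phi>))))"
proof
  obtain p q :: 'a where pq: "p \<noteq> q" using assms by blast
  define \<pi> where "\<pi> = PNeg (PAnd (PNeg (PAtom p)) (PNeg (PAtom q)))"
  define \<phi> where "\<phi> = Box (Imp (Atom p) (Atom q))"
  obtain w0 :: 'w where True by simp
  define M :: "('a,'w) model" where "M = ({w0}, {(w0,w0)}, \<lambda>r. {w0})"
  assume H: "\<forall>(\<pi> :: 'a pform) (\<phi> :: 'a form) (M :: ('a, 'w) model) w.
             S5_model M \<and> w \<in> fst M \<longrightarrow>
             holds M w (Iff (FgW \<pi> \<phi>) (Fg \<pi> (Fg (PNeg \<pi>) \<phi>)))"
  have s5: "S5_model M" unfolding M_def S5_model_def wf_model_def equiv_def refl_on_def sym_def trans_def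
    by auto
  have h: "holds M w0 (Iff (FgW \<pi> \<phi>) (Fg \<pi> (Fg (PNeg \<pi>) \<phi>)))"
    using H s5 unfolding M_def by auto
  have c1: "Cl \<pi> = {{(p,True),(q,True)}}" unfolding \<pi>_def by (rule cl_pi[OF pq])
  have c2: "Cl (PNeg \<pi>) = {{(p,False)},{(q,False)}}" unfolding \<pi>_def by (rule cl_npi[OF pq])
  let ?L = "lift M"
  have Lr: "rel_of ?L = {((w0,[]),(w0,[]))}" unfolding M_def lift_def rel_of_def by auto
  have Lv: "\<And>r. val_of ?L r = {(w0,[])}" unfolding M_def lift_def val_of_def by auto
  have Lw: "fst ?L = {(w0,[])}" unfolding M_def lift_def by auto
  let ?E = "{(p,True),(q,True)}"
  have A1: "sat (upd ?L [?E, F]) (w0, [0]) \<phi>" if F: "F \<in> {{(p,False)},{(q,False)}}" for F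
    unfolding \<phi>_def
  proof (simp add: Imp_def, intro allI impI)
    fix v assume r: "((w0, [0]), v) \<in> rel_of (upd ?L [?E, F])" and vp: "v \<in> val_of (upd ?L [?E, F]) p"
    from r obtain j where v: "v = (w0, [j])" and j: "j \<le> 2"
      unfolding rel_upd Lr by auto
    have "j = 0 \<or> j = 1 \<or> j = 2" using j by auto
    thus "v \<in> val_of (upd ?L [?E, F]) q"
      using vp F pq unfolding v using val_upd[of w0 "[]" _ ?L "[?E,F]"]
      by (auto simp: Lw Lv lit_upd_def)
  qed
  have A: "sat (lift M) (w0, []) (FgW \<pi> \<phi>)"
    using A1 by (simp add: c1 c2)
  let ?F = "{(p,False)}"
  let ?N = "upd (upd ?L [?E]) [?F]"
  have r2: "((w0,[0,0]),(w0,[1,1])) \<in> rel_of ?N"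
  proof -
    have "((w0,[0]),(w0,[1])) \<in> rel_of (upd ?L [?E])" unfolding rel_upd Lr by fastforce
    hence "((w0,[0]@[0]),(w0,[1]@[1])) \<in> rel_of ?N" unfolding rel_upd[of "upd ?L [?E]"] by fastforce
    thus ?thesis by simp
  qed
  have w1: "(w0,[1]) \<in> fst (upd ?L [?E])" using fst_upd[of w0 "[]" 1 ?L] Lw by simp
  have v1p: "(w0,[1]@[1]) \<in> val_of ?N p"
    unfolding val_upd using w1 by (simp add: lit_upd_def)
  have v1q: "(w0,[1]@[1]) \<notin> val_of ?N q"
  proof -
    have "(w0,[1]) \<notin> val_of (upd ?L [?E]) q"
      using val_upd[of w0 "[]" 1 ?L "[?E]" q] by (simp add: lit_upd_def)
    thus ?thesis unfolding val_upd using pq by (simp add: lit_upd_def)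
  qed
  have B: "\<not> sat (lift M) (w0, []) (Fg \<pi> (Fg (PNeg \<pi>) \<phi>))"
    using r2 v1p v1q by (simp add: c1 c2 \<phi>_def Imp_def) blast
  show False using h A B unfolding holds_def Iff_def Imp_def by simp
qed

end
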